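(* Let $(G,\varphi)$ be a complex unit gain graph of order $n$ with $r(G,\varphi)=2n-2c(G)-2\alpha(G)$, and let $u$ be a vertex of $G$ lying on a cycle of $G$. Then: (i) $r(G,\varphi)=r(G-u,\varphi)$; (ii) $r(G-u,\varphi)=2(n-1)-2c(G-u)-2\alpha(G-u)$; (iii) $c(G)=c(G-u)+1$; (iv) $\alpha(G)=\alpha(G-u)$; (v) $u$ lies on exactly one cycle of $G$, and $u$ is not a quasi-pendant vertex of $G$.
   Context: A complex unit gain graph $(G,\varphi)$ is a simple finite graph $G$ with a gain function $\varphi$ assigning to each oriented edge $e_{ij}$ a complex number of modulus $1$ with $\varphi(e_{ji})=\overline{\varphi(e_{ij})}$; its adjacency matrix has $(i,j)$-entry $\varphi(e_{ij})$ for adjacent $v_i,v_j$ and $0$ otherwise, and $r(G,\varphi)$ is its rank; induced subgraphs carry the restricted gain. $\alpha$ is the independence number and $c(G)=|E(G)|-|V(G)|+\omega(G)$ the cyclomatic number ($\omega$ = number of components). A pendant vertex is a vertex of degree $1$; a quasi-pendant vertex is a vertex that is adjacent to a pendant vertex and is not itself a pendant vertex. *)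

theory Defs
  imports Complex_Main "Jordan_Normal_Form.DL_Rank"
begin

definition simple_graph :: "'a set \<Rightarrow> ('a \<Rightarrow> 'a \<Rightarrow> bool) \<Rightarrow> bool" where
  "simple_graph V E \<longleftrightarrow> finite V \<and>
     (\<forall>x y. E x y \<longrightarrow> x \<in> V \<and> y \<in> V \<and> x \<noteq> y \<and> E y x)"

definition unit_gain_graph ::
  "'a set \<Rightarrow> ('a \<Rightarrow> 'a \<Rightarrow> bool) \<Rightarrow> ('a \<Rightarrow> 'a \<Rightarrow> complex) \<Rightarrow> bool" where
  "unit_gain_graph V E phi \<longleftrightarrow> simple_graph V E \<and>
     (\<forall>x y. E x y \<longrightarrow> cmod (phi x y) = 1 \<and> phi y x = cnj (phi x y))"

text \<open>Adjacency matrix w.r.t. the increasing enumeration of V (rank does not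
depend on the enumeration).\<close>
definition gain_adj_mat ::
  "'a::linorder set \<Rightarrow> ('a \<Rightarrow> 'a \<Rightarrow> bool) \<Rightarrow> ('a \<Rightarrow> 'a \<Rightarrow> complex) \<Rightarrow> complex mat" where
  "gain_adj_mat V E phi =
     (let vs = sorted_list_of_set V in
      mat (card V) (card V)
        (\<lambda>(i, j). if E (vs ! i) (vs ! j) then phi (vs ! i) (vs ! j) else 0))"

definition gain_rank ::
  "'a::linorder set \<Rightarrow> ('a \<Rightarrow> 'a \<Rightarrow> bool) \<Rightarrow> ('a \<Rightarrow> 'a \<Rightarrow> complex) \<Rightarrow> nat" where
  "gain_rank V E phi = vec_space.rank (card V) (gain_adj_mat V E phi)"

definition del_vert_V :: "'a set \<Rightarrow> 'a \<Rightarrow> 'a set" where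
  "del_vert_V V u = V - {u}"

definition del_vert_E :: "('a \<Rightarrow> 'a \<Rightarrow> bool) \<Rightarrow> 'a \<Rightarrow> 'a \<Rightarrow> 'a \<Rightarrow> bool" where
  "del_vert_E E u = (\<lambda>x y. E x y \<and> x \<noteq> u \<and> y \<noteq> u)"

definition edge_set :: "('a \<Rightarrow> 'a \<Rightarrow> bool) \<Rightarrow> 'a set set" where
  "edge_set E = {{x, y} | x y. E x y}"

definition num_components :: "'a set \<Rightarrow> ('a \<Rightarrow> 'a \<Rightarrow> bool) \<Rightarrow> nat" where
  "num_components V E = card (V // {(x, y). x \<in> V \<and> y \<in> V \<and> E\<^sup>*\<^sup>* x y})"

definition cyclomatic :: "'a set \<Rightarrow> ('a \<Rightarrow> 'a \<Rightarrow> bool) \<Rightarrow> int" where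
  "cyclomatic V E = int (card (edge_set E)) - int (card V) + int (num_components V E)"

definition independent :: "'a set \<Rightarrow> ('a \<Rightarrow> 'a \<Rightarrow> bool) \<Rightarrow> 'a set \<Rightarrow> bool" where
  "independent V E S \<longleftrightarrow> S \<subseteq> V \<and> (\<forall>x\<in>S. \<forall>y\<in>S. \<not> E x y)"

definition independence_number :: "'a set \<Rightarrow> ('a \<Rightarrow> 'a \<Rightarrow> bool) \<Rightarrow> nat" where
  "independence_number V E = Max {card S | S. independent V E S}"

definition is_cycle :: "'a set \<Rightarrow> ('a \<Rightarrow> 'a \<Rightarrow> bool) \<Rightarrow> 'a list \<Rightarrow> bool" where
  "is_cycle V E cs \<longleftrightarrow> length cs \<ge> 3 \<and> distinct cs \<and> set cs \<subseteq> V \<and>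
     (\<forall>i < length cs. E (cs ! i) (cs ! ((i + 1) mod length cs)))"

text \<open>The edge set of a cycle; it identifies the cycle as a subgraph.\<close>
definition cycle_edges :: "'a list \<Rightarrow> 'a set set" where
  "cycle_edges cs = {{cs ! i, cs ! ((i + 1) mod length cs)} | i. i < length cs}"

definition cycles_through :: "'a set \<Rightarrow> ('a \<Rightarrow> 'a \<Rightarrow> bool) \<Rightarrow> 'a \<Rightarrow> 'a set set set" where
  "cycles_through V E u = {cycle_edges cs | cs. is_cycle V E cs \<and> u \<in> set cs}"

definition on_cycle :: "'a set \<Rightarrow> ('a \<Rightarrow> 'a \<Rightarrow> bool) \<Rightarrow> 'a \<Rightarrow> bool" where
  "on_cycle V E u \<longleftrightarrow> (\<exists>cs. is_cycle V E cs \<and> u \<in> set cs)"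

definition degree :: "('a \<Rightarrow> 'a \<Rightarrow> bool) \<Rightarrow> 'a \<Rightarrow> nat" where
  "degree E x = card {y. E x y}"

definition pendant :: "('a \<Rightarrow> 'a \<Rightarrow> bool) \<Rightarrow> 'a \<Rightarrow> bool" where
  "pendant E x \<longleftrightarrow> degree E x = 1"

definition quasi_pendant :: "('a \<Rightarrow> 'a \<Rightarrow> bool) \<Rightarrow> 'a \<Rightarrow> bool" where
  "quasi_pendant E x \<longleftrightarrow> (\<exists>y. E x y \<and> pendant E y) \<and> \<not> pendant E x"

end

theory Submission
  imports Defs
begin


definition adjc :: "('a \<Rightarrow> 'a \<Rightarrow> bool) \<Rightarrow> ('a \<Rightarrow> 'a \<Rightarrow> complex) \<Rightarrow> 'a \<Rightarrow> 'a \<Rightarrow> complex" where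
  "adjc E phi x y = (if E x y then phi x y else 0)"

definition indepT :: "'a set \<Rightarrow> ('a \<Rightarrow> 'a \<Rightarrow> bool) \<Rightarrow> ('a \<Rightarrow> 'a \<Rightarrow> complex) \<Rightarrow> 'a set \<Rightarrow> bool" where
  "indepT V E phi T \<longleftrightarrow> T \<subseteq> V \<and>
     (\<forall>c. (\<forall>x\<in>V. (\<Sum>y\<in>T. adjc E phi x y * c y) = 0) \<longrightarrow> (\<forall>y\<in>T. c y = 0))"

lemma gain_adj_basics:
  fixes V :: "'a::linorder set"
  assumes "finite V"
  defines "vs \<equiv> sorted_list_of_set V"
  shows "gain_adj_mat V E phi \<in> carrier_mat (card V) (card V)"
    and "distinct vs" "length vs = card V" "set vs = V"
    and "\<And>i j. i < card V \<Longrightarrow> j < card V \<Longrightarrow> gain_adj_mat V E phi $$ (i,j) = adjc E phi (vs!i) (vs!j)"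
  using assms by (auto simp: gain_adj_mat_def Let_def adjc_def)

lemma rank_ge:
  fixes V :: "'a::linorder set"
  assumes finV: "finite V" and ind: "indepT V E phi T"
  shows "card T \<le> gain_rank V E phi"
proof -
  define n where "n = card V"
  interpret vec_space "TYPE(complex)" n .
  define vs where "vs = sorted_list_of_set V"
  define A where "A = gain_adj_mat V E phi"
  have A: "A \<in> carrier_mat n n" using gain_adj_basics[OF finV] unfolding A_def n_def by auto
  have vs: "distinct vs" "length vs = n" "set vs = V" using gain_adj_basics[OF finV] unfolding vs_def n_def by auto
  have Aij: "\<And>i j. i<n \<Longrightarrow> j<n \<Longrightarrow> A $$ (i,j) = adjc E phi (vs!i) (vs!j)"
    using gain_adj_basics[OF finV] unfolding vs_def n_def A_def by auto
  have TV: "T \<subseteq> V" using ind unfolding indepT_def by auto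
  define J where "J = {j. j < n \<and> vs!j \<in> T}"
  have injJ: "inj_on (nth vs) J" using vs(1,2) unfolding J_def by (simp add: inj_on_def nth_eq_iff_index_eq)
  have TJ: "T = nth vs ` J"
  proof
    show "T \<subseteq> nth vs ` J"
    proof
      fix y assume "y \<in> T"
      then have "y \<in> set vs" using TV vs by auto
      then obtain j where "j < n" "vs!j = y" using vs(2) by (auto simp: in_set_conv_nth)
      then show "y \<in> nth vs ` J" using \<open>y \<in> T\<close> unfolding J_def by auto
    qed
  qed (auto simp: J_def)
  have cardJ: "card J = card T" using TJ injJ card_image by metis
  have indc: "\<And>c. (\<forall>x\<in>V. (\<Sum>y\<in>T. adjc E phi x y * c y) = 0) \<Longrightarrow> (\<forall>y\<in>T. c y = 0)"
    using ind unfolding indepT_def by blast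
  have sumJ: "\<And>i g. i < n \<Longrightarrow> (\<Sum>y\<in>T. adjc E phi (vs!i) y * g y) = (\<Sum>j\<in>J. A $$ (i,j) * g (vs!j))"
    unfolding TJ by (subst sum.reindex[OF injJ]) (auto simp: Aij J_def)
  have Vi: "\<And>x. x \<in> V \<Longrightarrow> \<exists>i<n. x = vs!i" using vs by (metis in_set_conv_nth)
  have injcol: "inj_on (\<lambda>j. col A j) J"
  proof (rule inj_onI, rule ccontr)
    fix j1 j2 assume j: "j1 \<in> J" "j2 \<in> J" "col A j1 = col A j2" "j1 \<noteq> j2"
    define c where "c = (\<lambda>y. if y = vs!j1 then (1::complex) else if y = vs!j2 then -1 else 0)"
    have ne: "vs!j1 \<noteq> vs!j2" using j injJ unfolding inj_on_def by auto
    have "\<forall>y\<in>T. c y = 0"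
    proof (rule indc, intro ballI)
      fix x assume "x \<in> V"
      then obtain i where i: "i < n" "x = vs!i" using Vi by blast
      have "(\<Sum>y\<in>T. adjc E phi x y * c y) = (\<Sum>j\<in>J. A $$ (i,j) * c (vs!j))" using sumJ i by simp
      also have "\<dots> = (\<Sum>j\<in>{j1,j2}. A $$ (i,j) * c (vs!j))"
        by (rule sum.mono_neutral_right) (use j vs(1,2) in \<open>auto simp: c_def J_def nth_eq_iff_index_eq\<close>)
      also have "\<dots> = A $$ (i,j1) - A $$ (i,j2)" using j ne by (simp add: c_def)
      also have "\<dots> = 0" using j(3) i A j unfolding J_def
        by (metis (no_types, lifting) carrier_matD(1) carrier_matD(2) index_col mem_Collect_eq right_minus_eq)
      finally show "(\<Sum>y\<in>T. adjc E phi x y * c y) = 0" .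
    qed
    moreover have "vs!j1 \<in> T" using j unfolding J_def by auto
    ultimately show False unfolding c_def by auto
  qed
  define U where "U = (\<lambda>j. col A j) ` J"
  have Ucols: "U \<subseteq> set (cols A)" unfolding U_def J_def using A by (auto simp: cols_def)
  have Ucar: "U \<subseteq> carrier_vec n" unfolding U_def J_def using A by auto
  have finU: "finite U" unfolding U_def J_def by auto
  have "lin_indpt U"
  proof
    assume "lin_dep U"
    then obtain a w where a: "lincomb a U = 0\<^sub>v n" "w \<in> U" "a w \<noteq> 0"
      using finite_lin_dep[OF finU _ Ucar] by blast
    define c where "c = (\<lambda>y. a (col A (inv_into J (nth vs) y)))"
    have "\<forall>y\<in>T. c y = 0"
    proof (rule indc, intro ballI)
      fix x assume "x \<in> V"
      then obtain i where i: "i < n" "x = vs!i" using Vi by blast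
      have "(\<Sum>y\<in>T. adjc E phi x y * c y) = (\<Sum>j\<in>J. A $$ (i,j) * c (vs!j))" using sumJ i by simp
      also have "\<dots> = (\<Sum>j\<in>J. a (col A j) * col A j $ i)"
        by (rule sum.cong) (use i A injJ in \<open>auto simp: c_def J_def mult.commute\<close>)
      also have "\<dots> = (\<Sum>u\<in>U. a u * u $ i)" unfolding U_def by (simp add: sum.reindex[OF injcol])
      also have "\<dots> = lincomb a U $ i" using lincomb_index[OF i(1) Ucar] by simp
      also have "\<dots> = 0" using a i by simp
      finally show "(\<Sum>y\<in>T. adjc E phi x y * c y) = 0" .
    qed
    moreover obtain j0 where "j0 \<in> J" "w = col A j0" using a U_def by auto
    ultimately show False using a injJ unfolding c_def J_def by auto
  qed
  then have "card U \<le> rank A" using rank_ge_card_indpt[OF A Ucols] by blast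
  moreover have "card U = card T" unfolding U_def using card_image[OF injcol] cardJ by simp
  ultimately show ?thesis unfolding gain_rank_def A_def n_def by simp
qed

lemma rank_ex:
  fixes V :: "'a::linorder set"
  assumes finV: "finite V"
  shows "\<exists>T. indepT V E phi T \<and> card T = gain_rank V E phi"
proof -
  define n where "n = card V"
  interpret vec_space "TYPE(complex)" n .
  define vs where "vs = sorted_list_of_set V"
  define A where "A = gain_adj_mat V E phi"
  have A: "A \<in> carrier_mat n n" using gain_adj_basics[OF finV] unfolding A_def n_def by auto
  have vs: "distinct vs" "length vs = n" "set vs = V" using gain_adj_basics[OF finV] unfolding vs_def n_def by auto
  have Aij: "\<And>i j. i<n \<Longrightarrow> j<n \<Longrightarrow> A $$ (i,j) = adjc E phi (vs!i) (vs!j)"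
    using gain_adj_basics[OF finV] unfolding vs_def n_def A_def by auto
  have Vi: "\<And>x. x \<in> V \<Longrightarrow> \<exists>i<n. x = vs!i" using vs by (metis in_set_conv_nth)
  let ?P = "\<lambda>T. T \<subseteq> set (cols A) \<and> lin_indpt T"
  obtain S where S: "maximal S ?P"
    using maximal_exists[of ?P "card (set (cols A))" "{}"]
    by (meson List.finite_set card_mono empty_iff empty_subsetI finite_lin_indpt2 rev_finite_subset)
  have rk: "rank A = card S" using rank_card_indpt[OF A S] .
  have Sc: "S \<subseteq> set (cols A)" "lin_indpt S" using S unfolding maximal_def by auto
  have finS: "finite S" using Sc(1) finite_subset by blast
  have Scar: "S \<subseteq> carrier_vec n" using Sc(1) A by (auto simp: cols_def)
  have "\<forall>s\<in>S. \<exists>j. j < n \<and> col A j = s" using Sc(1) A by (force simp: cols_def)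
  then obtain jf where jf: "\<And>s. s \<in> S \<Longrightarrow> jf s < n \<and> col A (jf s) = s" by metis
  define T where "T = (\<lambda>s. vs ! jf s) ` S"
  have inj: "inj_on (\<lambda>s. vs ! jf s) S"
  proof (rule inj_onI)
    fix s1 s2 assume "s1 \<in> S" "s2 \<in> S" "vs ! jf s1 = vs ! jf s2"
    then have "jf s1 = jf s2" using jf vs nth_eq_iff_index_eq by metis
    then show "s1 = s2" using jf \<open>s1 \<in> S\<close> \<open>s2 \<in> S\<close> by metis
  qed
  have cardT: "card T = card S" unfolding T_def using card_image[OF inj] .
  have "indepT V E phi T"
    unfolding indepT_def
  proof (intro conjI allI impI)
    show "T \<subseteq> V" unfolding T_def using jf vs by auto
    fix c assume c: "\<forall>x\<in>V. (\<Sum>y\<in>T. adjc E phi x y * c y) = 0"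
    define a where "a = (\<lambda>s. c (vs ! jf s))"
    have lc: "lincomb a S = 0\<^sub>v n"
    proof (rule eq_vecI)
      show "dim_vec (lincomb a S) = dim_vec (0\<^sub>v n)" using lincomb_dim[OF finS Scar] by simp
      fix i assume "i < dim_vec (0\<^sub>v n)"
      then have i: "i < n" by simp
      have "lincomb a S $ i = (\<Sum>s\<in>S. a s * s $ i)" using lincomb_index[OF i Scar] .
      also have "\<dots> = (\<Sum>s\<in>S. adjc E phi (vs!i) (vs ! jf s) * c (vs ! jf s))"
      proof (rule sum.cong[OF refl])
        fix s assume "s \<in> S"
        then have "s $ i = col A (jf s) $ i" using jf by metis
        also have "\<dots> = A $$ (i, jf s)" apply (rule index_col) using jf[OF \<open>s \<in> S\<close>] i A by auto
        finally show "a s * s $ i = adjc E phi (vs!i) (vs ! jf s) * c (vs ! jf s)"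
          using Aij jf[OF \<open>s \<in> S\<close>] i by (simp add: a_def mult.commute)
      qed
      also have "\<dots> = (\<Sum>y\<in>T. adjc E phi (vs!i) y * c y)" unfolding T_def
        by (simp add: sum.reindex[OF inj])
      also have "\<dots> = 0" using c i vs by auto
      finally show "lincomb a S $ i = 0\<^sub>v n $ i" using i by simp
    qed
    show "\<forall>y\<in>T. c y = 0"
    proof (rule ccontr)
      assume "\<not> (\<forall>y\<in>T. c y = 0)"
      then obtain s where "s \<in> S" "a s \<noteq> 0" unfolding T_def a_def by auto
      then have "lin_dep S" using lin_dep_crit[OF finS subset_refl _ \<open>s \<in> S\<close> _ lc] by auto
      then show False using Sc(2) by simp
    qed
  qed
  then show ?thesis using cardT rk unfolding gain_rank_def A_def n_def by auto
qed


lemma rank_del_le: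
  fixes V :: "'a::linorder set"
  assumes finV: "finite V"
  shows "gain_rank (del_vert_V V u) (del_vert_E E u) phi \<le> gain_rank V E phi"
proof -
  have fin': "finite (del_vert_V V u)" using finV by (simp add: del_vert_V_def)
  obtain T where T: "indepT (del_vert_V V u) (del_vert_E E u) phi T"
     "card T = gain_rank (del_vert_V V u) (del_vert_E E u) phi" using rank_ex[OF fin'] by blast
  have TV: "T \<subseteq> V - {u}" using T(1) unfolding indepT_def del_vert_V_def by blast
  have "indepT V E phi T"
    unfolding indepT_def
  proof (intro conjI allI impI)
    show "T \<subseteq> V" using TV by blast
    fix c assume c: "\<forall>x\<in>V. (\<Sum>y\<in>T. adjc E phi x y * c y) = 0"
    have "\<forall>x\<in>del_vert_V V u. (\<Sum>y\<in>T. adjc (del_vert_E E u) phi x y * c y) = 0"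
    proof
      fix x assume x: "x \<in> del_vert_V V u"
      have "(\<Sum>y\<in>T. adjc (del_vert_E E u) phi x y * c y) = (\<Sum>y\<in>T. adjc E phi x y * c y)"
      proof (rule sum.cong[OF refl])
        fix y assume "y \<in> T" then have "y \<noteq> u" "x \<noteq> u" using TV x by (auto simp: del_vert_V_def)
        then show "adjc (del_vert_E E u) phi x y * c y = adjc E phi x y * c y" by (simp add: adjc_def del_vert_E_def)
      qed
      then show "(\<Sum>y\<in>T. adjc (del_vert_E E u) phi x y * c y) = 0" using c x by (simp add: del_vert_V_def)
    qed
    then show "\<forall>y\<in>T. c y = 0" using T(1) unfolding indepT_def by blast
  qed
  then show ?thesis using rank_ge[OF finV] T(2) by metis
qed

lemma rank_pendant:
  fixes V :: "'a::linorder set"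
  assumes finV: "finite V" and vV: "v \<in> V" and wV: "w \<in> V" and vw: "v \<noteq> w"
    and Evw: "E v w" and only: "\<And>y. E v y \<Longrightarrow> y = w" and sym: "\<And>x. E x v \<Longrightarrow> E v x"
    and p1: "phi v w \<noteq> 0" and p2: "phi w v \<noteq> 0" and Ewv: "E w v"
  shows "gain_rank (del_vert_V (del_vert_V V w) v) (del_vert_E (del_vert_E E w) v) phi + 2 \<le> gain_rank V E phi"
proof -
  let ?V = "del_vert_V (del_vert_V V w) v" and ?E = "del_vert_E (del_vert_E E w) v"
  have V': "?V = V - {v,w}" by (auto simp: del_vert_V_def)
  have E': "\<And>x y. ?E x y = (E x y \<and> x \<noteq> v \<and> x \<noteq> w \<and> y \<noteq> v \<and> y \<noteq> w)" by (auto simp: del_vert_E_def)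
  have fin': "finite ?V" using finV V' by simp
  obtain T where T: "indepT ?V ?E phi T" "card T = gain_rank ?V ?E phi" using rank_ex[OF fin'] by blast
  have TV: "T \<subseteq> V - {v,w}" using T(1) V' by (simp add: indepT_def)
  have finT: "finite T" using TV finV finite_subset by blast
  define T' where "T' = insert v (insert w T)"
  have cardT': "card T' = card T + 2" proof -
    have "v \<notin> insert w T" "w \<notin> T" using TV vw by auto
    then show ?thesis using finT unfolding T'_def by simp
  qed
  have split: "\<And>f :: 'a \<Rightarrow> complex. (\<Sum>y\<in>T'. f y) = f v + f w + (\<Sum>y\<in>T. f y)"
  proof -
    fix f :: "'a \<Rightarrow> complex"
    have "v \<notin> insert w T" "w \<notin> T" using TV vw by auto
    then show "(\<Sum>y\<in>T'. f y) = f v + f w + (\<Sum>y\<in>T. f y)" using finT unfolding T'_def by (simp add: add.assoc)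
  qed
  have "indepT V E phi T'"
    unfolding indepT_def
  proof (intro conjI allI impI)
    show "T' \<subseteq> V" using TV vV wV by (auto simp: T'_def)
    fix c assume c: "\<forall>x\<in>V. (\<Sum>y\<in>T'. adjc E phi x y * c y) = 0"
    have rv: "(\<Sum>y\<in>T'. adjc E phi v y * c y) = phi v w * c w"
    proof -
      have nE: "\<And>y. y \<noteq> w \<Longrightarrow> \<not> E v y" using only by blast
      have s1: "(\<Sum>y\<in>T. adjc E phi v y * c y) = 0"
      proof (rule sum.neutral, rule ballI)
        fix y assume "y \<in> T" then have "y \<noteq> w" using TV by auto
        then show "adjc E phi v y * c y = 0" using nE by (simp add: adjc_def)
      qed
      have s2: "adjc E phi v v = 0" using nE vw by (simp add: adjc_def)
      have s3: "adjc E phi v w = phi v w" using Evw by (simp add: adjc_def)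
      show ?thesis using split[of "\<lambda>y. adjc E phi v y * c y"] s1 s2 s3 by simp
    qed
    have "phi v w * c w = 0" using bspec[OF c vV] rv by simp
    then have cw: "c w = 0" using p1 by simp
    have "\<forall>x\<in>?V. (\<Sum>y\<in>T. adjc ?E phi x y * c y) = 0"
    proof
      fix x assume x: "x \<in> ?V"
      then have xx: "x \<in> V" "x \<noteq> v" "x \<noteq> w" using V' by auto
      have "\<not> E x v"
      proof
        assume "E x v" then have "E v x" by (rule sym)
        then have "x = w" by (rule only)
        with xx show False by simp
      qed
      then have "adjc E phi x v = 0" by (simp add: adjc_def)
      then have "(\<Sum>y\<in>T'. adjc E phi x y * c y) = (\<Sum>y\<in>T. adjc E phi x y * c y)"
        using split[of "\<lambda>y. adjc E phi x y * c y"] cw by simp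
      also have "\<dots> = (\<Sum>y\<in>T. adjc ?E phi x y * c y)"
        by (rule sum.cong) (use xx TV in \<open>auto simp: adjc_def E'\<close>)
      finally show "(\<Sum>y\<in>T. adjc ?E phi x y * c y) = 0" using bspec[OF c xx(1)] by simp
    qed
    then have cT: "\<forall>y\<in>T. c y = 0" using T(1) unfolding indepT_def by blast
    have s0: "(\<Sum>y\<in>T. adjc E phi w y * c y) = 0" by (rule sum.neutral) (use cT in auto)
    have "(\<Sum>y\<in>T'. adjc E phi w y * c y) = adjc E phi w v * c v + adjc E phi w w * c w + 0"
      using split[of "\<lambda>y. adjc E phi w y * c y"] s0 by simp
    also have "\<dots> = phi w v * c v" using cw Ewv by (simp add: adjc_def)
    finally have "phi w v * c v = 0" using bspec[OF c wV] by simp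
    then have cv: "c v = 0" using p2 by simp
    show "\<forall>y\<in>T'. c y = 0" using cv cw cT unfolding T'_def by auto
  qed
  from rank_ge[OF finV this] show ?thesis using T(2) cardT' by simp
qed



definition reach :: "'a set \<Rightarrow> ('a \<Rightarrow> 'a \<Rightarrow> bool) \<Rightarrow> ('a \<times> 'a) set" where
  "reach V E = {(x, y). x \<in> V \<and> y \<in> V \<and> E\<^sup>*\<^sup>* x y}"

lemma nc_reach: "num_components V E = card (V // reach V E)"
  by (simp add: num_components_def reach_def)

lemma sg_sym: "simple_graph V E \<Longrightarrow> E x y \<Longrightarrow> E y x"
  by (auto simp: simple_graph_def)

lemma sg_V: "simple_graph V E \<Longrightarrow> E x y \<Longrightarrow> x \<in> V \<and> y \<in> V"
  by (auto simp: simple_graph_def)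

lemma sg_irr: "simple_graph V E \<Longrightarrow> E x y \<Longrightarrow> x \<noteq> y"
  by (auto simp: simple_graph_def)

lemma sg_fin: "simple_graph V E \<Longrightarrow> finite V"
  by (auto simp: simple_graph_def)

lemma sg_del: "simple_graph V E \<Longrightarrow> simple_graph (del_vert_V V u) (del_vert_E E u)"
  by (auto simp: simple_graph_def del_vert_V_def del_vert_E_def)

lemma ugg_del: "unit_gain_graph V E phi \<Longrightarrow> unit_gain_graph (del_vert_V V u) (del_vert_E E u) phi"
  unfolding unit_gain_graph_def using sg_del by (auto simp: del_vert_E_def)

lemma rt_sym:
  assumes "\<And>a b. E a b \<Longrightarrow> E b a" and "E\<^sup>*\<^sup>* x y"
  shows "E\<^sup>*\<^sup>* y x"
  using assms(2)
proof (induction rule: rtranclp_induct)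
  case base then show ?case by simp
next
  case (step y z)
  then show ?case using assms(1) by (meson converse_rtranclp_into_rtranclp)
qed

lemma rt_V:
  assumes "simple_graph V E" "E\<^sup>*\<^sup>* x y" "x \<in> V"
  shows "y \<in> V"
  using assms(2,3)
  by (induction rule: rtranclp_induct) (use sg_V[OF assms(1)] in auto)

lemma del_rt_mono:
  assumes "(del_vert_E E x)\<^sup>*\<^sup>* a b"
  shows "E\<^sup>*\<^sup>* a b"
  using assms by (induction rule: rtranclp_induct) (auto simp: del_vert_E_def intro: rtranclp.rtrancl_into_rtrancl)

lemma del_rt_not:
  assumes "(del_vert_E E x)\<^sup>*\<^sup>* z a" "z \<noteq> x"
  shows "a \<noteq> x"
  using assms by (induction rule: rtranclp_induct) (auto simp: del_vert_E_def)

lemma del_rt_Q: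
  assumes "E\<^sup>*\<^sup>* z w" "\<not> E\<^sup>*\<^sup>* z x"
  shows "(del_vert_E E x)\<^sup>*\<^sup>* z w"
  using assms
proof (induction rule: rtranclp_induct)
  case base then show ?case by simp
next
  case (step a b)
  have "a \<noteq> x" using step by auto
  moreover have "b \<noteq> x" using step by (metis rtranclp.rtrancl_into_rtrancl)
  ultimately have "del_vert_E E x a b" using step by (simp add: del_vert_E_def)
  then show ?case using step by (meson rtranclp.rtrancl_into_rtrancl)
qed

lemma del_rt_P:
  assumes sym: "\<And>a b. E a b \<Longrightarrow> E b a" and "E\<^sup>*\<^sup>* z w" "z \<noteq> x"
  shows "(del_vert_E E x)\<^sup>*\<^sup>* z w \<or> (\<exists>y. E x y \<and> (del_vert_E E x)\<^sup>*\<^sup>* z y)"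
  using assms(2,3)
proof (induction rule: rtranclp_induct)
  case base then show ?case by simp
next
  case (step a b)
  show ?case
  proof (cases "\<exists>y. E x y \<and> (del_vert_E E x)\<^sup>*\<^sup>* z y")
    case True then show ?thesis by blast
  next
    case False
    then have za: "(del_vert_E E x)\<^sup>*\<^sup>* z a" using step by blast
    then have ax: "a \<noteq> x" using del_rt_not step by metis
    show ?thesis
    proof (cases "b = x")
      case True
      then have "E x a" using sym step by blast
      then show ?thesis using za by blast
    next
      case False
      then have "del_vert_E E x a b" using ax step by (simp add: del_vert_E_def)
      then show ?thesis using za by (meson rtranclp.rtrancl_into_rtrancl)
    qed
  qed
qed

lemma class_eq:
  assumes sym: "\<And>a b. E a b \<Longrightarrow> E b a" and "E\<^sup>*\<^sup>* a b" "a \<in> V" "b \<in> V"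
  shows "reach V E `` {a} = reach V E `` {b}"
proof -
  have "E\<^sup>*\<^sup>* b a" using rt_sym[of E, OF sym assms(2)] by blast
  then show ?thesis using assms(2-4) unfolding reach_def
    by (auto intro: rtranclp_trans)
qed

lemma del_sym: "(\<And>a b. E a b \<Longrightarrow> E b a) \<Longrightarrow> del_vert_E E x a b \<Longrightarrow> del_vert_E E x b a"
  by (auto simp: del_vert_E_def)

lemma comp_bound:
  assumes sg: "simple_graph V E" and xV: "x \<in> V"
  defines "f \<equiv> (\<lambda>y. reach (del_vert_V V x) (del_vert_E E x) `` {y})"
  shows "num_components (del_vert_V V x) (del_vert_E E x) + 1 \<le> num_components V E + card (f ` {y. E x y})"
proof -
  let ?V = "del_vert_V V x" and ?E = "del_vert_E E x"
  let ?R = "reach V E" and ?R' = "reach ?V ?E"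
  have sym: "\<And>a b. E a b \<Longrightarrow> E b a" using sg_sym[OF sg] by blast
  have finV: "finite V" using sg_fin[OF sg] .
  have sub: "?V // ?R' \<subseteq> (V // ?R - {?R `` {x}}) \<union> f ` {y. E x y}"
  proof
    fix K assume "K \<in> ?V // ?R'"
    then obtain z where z: "z \<in> ?V" "K = ?R' `` {z}" unfolding quotient_def by blast
    have zV: "z \<in> V" "z \<noteq> x" using z by (auto simp: del_vert_V_def)
    show "K \<in> (V // ?R - {?R `` {x}}) \<union> f ` {y. E x y}"
    proof (cases "E\<^sup>*\<^sup>* z x")
      case True
      have "\<not> ?E\<^sup>*\<^sup>* z x" using del_rt_not[of E x z x] zV(2) by blast
      then obtain y where y: "E x y" "?E\<^sup>*\<^sup>* z y"
        using del_rt_P[of E, OF sym True zV(2)] by blast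
      have "y \<in> V" "y \<noteq> x" using sg_V[OF sg y(1)] sg_irr[OF sg y(1)] by auto
      then have yV: "y \<in> ?V" by (simp add: del_vert_V_def)
      have "K = f y" unfolding f_def z(2)
        by (rule class_eq[OF _ y(2) z(1) yV]) (rule del_sym[OF sym])
      then show ?thesis using y by blast
    next
      case False
      have "K = ?R `` {z}"
      proof
        show "K \<subseteq> ?R `` {z}"
        proof
          fix w assume "w \<in> K"
          then have "w \<in> ?V" "?E\<^sup>*\<^sup>* z w" using z unfolding reach_def by auto
          then have "w \<in> V" "E\<^sup>*\<^sup>* z w" using del_rt_mono by (auto simp: del_vert_V_def)
          then show "w \<in> ?R `` {z}" using zV unfolding reach_def by auto
        qed
        show "?R `` {z} \<subseteq> K"
        proof
          fix w assume "w \<in> ?R `` {z}"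
          then have w: "w \<in> V" "E\<^sup>*\<^sup>* z w" unfolding reach_def by auto
          have "w \<noteq> x" using w False by blast
          then show "w \<in> K" using z w del_rt_Q[OF w(2) False] unfolding reach_def
            by (auto simp: del_vert_V_def)
        qed
      qed
      moreover have "?R `` {z} \<in> V // ?R" using zV by (auto simp: quotient_def)
      moreover have "?R `` {z} \<noteq> ?R `` {x}"
      proof
        assume "?R `` {z} = ?R `` {x}"
        moreover have "x \<in> ?R `` {x}" using xV unfolding reach_def by auto
        ultimately have "x \<in> ?R `` {z}" by simp
        then show False using False unfolding reach_def by auto
      qed
      ultimately show ?thesis by blast
    qed
  qed
  have finQ: "finite (V // ?R)" by (rule finite_quotient[OF finV]) (auto simp: reach_def)
  have finN: "finite {y. E x y}" using finV sg_V[OF sg] by (metis (mono_tags) finite_subset mem_Collect_eq subsetI)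
  have xin: "?R `` {x} \<in> V // ?R" using xV by (auto simp: quotient_def)
  have "card (?V // ?R') \<le> card ((V // ?R - {?R `` {x}}) \<union> f ` {y. E x y})"
    by (rule card_mono[OF _ sub]) (use finQ finN in auto)
  also have "\<dots> \<le> card (V // ?R - {?R `` {x}}) + card (f ` {y. E x y})" by (rule card_Un_le)
  also have "card (V // ?R - {?R `` {x}}) = card (V // ?R) - 1" using xin finQ by simp
  finally have "card (?V // ?R') \<le> card (V // ?R) - 1 + card (f ` {y. E x y})" .
  moreover have "card (V // ?R) \<ge> 1" using xin finQ by (metis card_0_eq empty_iff less_one not_le)
  ultimately show ?thesis unfolding nc_reach by linarith
qed

lemma edge_set_sub: "simple_graph V E \<Longrightarrow> edge_set E \<subseteq> Pow V"
  by (auto simp: edge_set_def simple_graph_def)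

lemma edge_count:
  assumes sg: "simple_graph V E"
  shows "card (edge_set E) = card (edge_set (del_vert_E E x)) + degree E x"
proof -
  let ?X = "(\<lambda>y. {x, y}) ` {y. E x y}"
  have eq: "edge_set E = edge_set (del_vert_E E x) \<union> ?X"
  proof
    show "edge_set E \<subseteq> edge_set (del_vert_E E x) \<union> ?X"
    proof
      fix e assume "e \<in> edge_set E"
      then obtain a b where ab: "e = {a,b}" "E a b" unfolding edge_set_def by blast
      show "e \<in> edge_set (del_vert_E E x) \<union> ?X"
      proof (cases "a = x \<or> b = x")
        case True
        then show ?thesis
        proof
          assume "a = x" then show ?thesis using ab by blast
        next
          assume "b = x" then have "E x a" "e = {x, a}" using ab sg_sym[OF sg] by auto
          then show ?thesis by blast
        qed
      next
        case False
        then have "del_vert_E E x a b" using ab by (simp add: del_vert_E_def)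
        then show ?thesis using ab unfolding edge_set_def by blast
      qed
    qed
    show "edge_set (del_vert_E E x) \<union> ?X \<subseteq> edge_set E"
    proof
      fix e assume "e \<in> edge_set (del_vert_E E x) \<union> ?X"
      then show "e \<in> edge_set E"
      proof
        assume "e \<in> edge_set (del_vert_E E x)"
        then obtain a b where "e = {a,b}" "del_vert_E E x a b" unfolding edge_set_def by blast
        then show ?thesis unfolding edge_set_def del_vert_E_def by blast
      next
        assume "e \<in> ?X"
        then obtain y where "e = {x,y}" "E x y" by blast
        then show ?thesis unfolding edge_set_def by blast
      qed
    qed
  qed
  have disj: "edge_set (del_vert_E E x) \<inter> ?X = {}"
  proof (rule ccontr)
    assume "edge_set (del_vert_E E x) \<inter> ?X \<noteq> {}"
    then obtain e where e: "e \<in> edge_set (del_vert_E E x)" "e \<in> ?X" by blast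
    from e(1) obtain a b where "e = {a,b}" "del_vert_E E x a b" unfolding edge_set_def by blast
    then have "x \<notin> e" by (auto simp: del_vert_E_def)
    moreover from e(2) have "x \<in> e" by blast
    ultimately show False by blast
  qed
  have fin: "finite (edge_set E)" using edge_set_sub[OF sg] sg_fin[OF sg]
    by (meson finite_Pow_iff finite_subset)
  have fin1: "finite (edge_set (del_vert_E E x))" using fin eq by simp
  have fin2: "finite ?X" using fin eq by simp
  have inj: "inj_on (\<lambda>y. {x, y}) {y. E x y}"
  proof (rule inj_onI)
    fix a b assume "a \<in> {y. E x y}" "b \<in> {y. E x y}" "{x, a} = {x, b}"
    then have "x \<noteq> a" "x \<noteq> b" "{x, a} = {x, b}" using sg_irr[OF sg] by auto
    then show "a = b" by (metis doubleton_eq_iff)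
  qed
  have "card ?X = degree E x" unfolding degree_def using card_image[OF inj] .
  then show ?thesis unfolding eq using card_Un_disjoint[OF fin1 fin2 disj] by simp
qed

lemma cyc_del:
  assumes sg: "simple_graph V E" and xV: "x \<in> V"
  defines "f \<equiv> (\<lambda>y. reach (del_vert_V V x) (del_vert_E E x) `` {y})"
  shows "cyclomatic (del_vert_V V x) (del_vert_E E x) \<le> cyclomatic V E - int (degree E x) + int (card (f ` {y. E x y}))"
proof -
  have "card (del_vert_V V x) + 1 = card V" using xV sg_fin[OF sg] card_Suc_Diff1[of V x]
    unfolding del_vert_V_def by simp
  moreover note comp_bound[OF sg xV] edge_count[OF sg, of x]
  ultimately show ?thesis unfolding cyclomatic_def f_def by linarith
qed


lemma mod_lt2: "a < 2*m \<Longrightarrow> (a::nat) mod m = (if a < m then a else a - m)"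
proof (cases "a < m")
  case False
  assume "a < 2*m"
  then have "a - m < m" using False by linarith
  then have "(a - m) mod m = a - m" by simp
  moreover have "a mod m = (a - m) mod m" using False by (simp add: le_mod_geq)
  ultimately show ?thesis using False by simp
qed simp

lemma idx_ne: "i < m \<Longrightarrow> 1 \<le> t \<Longrightarrow> t \<le> m - 1 \<Longrightarrow> (i + t) mod m \<noteq> (i::nat)"
  using mod_lt2[of "i + t" m] by (auto split: if_splits)

lemma mod_prev: "i < m \<Longrightarrow> ((i + m - 1) mod m + 1) mod m = (i::nat)"
proof (cases "i = 0")
  case True
  assume "i < m"
  then show ?thesis using True by simp
next
  case False
  assume "i < m"
  then have "(i + m - 1) mod m = i - 1" using mod_lt2[of "i + m - 1" m] False by auto
  then show ?thesis using False \<open>i < m\<close> by simp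
qed

lemma mod_prev_inv: "j < m \<Longrightarrow> (j+1) mod m = i \<Longrightarrow> j = (i + m - 1) mod (m::nat)"
proof (cases "j + 1 < m")
  case True
  assume "j < m" "(j+1) mod m = i"
  then have "i = j + 1" using True by simp
  then show ?thesis using mod_lt2[of "i + m - 1" m] True by auto
next
  case False
  assume "j < m" "(j+1) mod m = i"
  then have "j + 1 = m" using False by simp
  then have "i = 0" using \<open>(j+1) mod m = i\<close> by simp
  then show ?thesis using \<open>j + 1 = m\<close> by simp
qed

definition nb :: "'a list \<Rightarrow> 'a \<Rightarrow> 'a set" where
  "nb cs x = {y. {x, y} \<in> cycle_edges cs}"

lemma cycle_edges_sub: "e \<in> cycle_edges cs \<Longrightarrow> length cs > 0 \<Longrightarrow> e \<subseteq> set cs"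
  unfolding cycle_edges_def by auto

lemma cyc_nbrs:
  assumes sg: "simple_graph V E" and cyc: "is_cycle V E cs" and i: "i < length cs"
  defines "m \<equiv> length cs"
  defines "x \<equiv> cs ! i" and "a \<equiv> cs ! ((i+1) mod m)" and "b \<equiv> cs ! ((i+m-1) mod m)"
  shows "E x a \<and> E x b \<and> a \<noteq> b \<and> a \<noteq> x \<and> b \<noteq> x \<and> a \<in> V \<and> b \<in> V
     \<and> (del_vert_E E x)\<^sup>*\<^sup>* a b \<and> nb cs x = {a, b}"
proof -
  have m3: "m \<ge> 3" and dist: "distinct cs" and sV: "set cs \<subseteq> V"
    and ed: "\<And>j. j < m \<Longrightarrow> E (cs ! j) (cs ! ((j + 1) mod m))"
    using cyc unfolding is_cycle_def m_def by auto
  have im: "i < m" using i m_def by simp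
  have ne: "\<And>p q. p < m \<Longrightarrow> q < m \<Longrightarrow> p \<noteq> q \<Longrightarrow> cs ! p \<noteq> cs ! q"
    using dist m_def by (simp add: nth_eq_iff_index_eq)
  have Exa: "E x a" using ed[OF im] unfolding x_def a_def .
  have pm: "(i + m - 1) mod m < m" using m3 by simp
  have "E b x" using ed[OF pm] mod_prev[OF im] unfolding x_def b_def by simp
  then have Exb: "E x b" using sg_sym[OF sg] by blast
  have i1: "(i+1) mod m \<noteq> i" using idx_ne[OF im, of 1] m3 by simp
  have i2: "(i+m-1) mod m \<noteq> i" using idx_ne[OF im, of "m-1"] m3 by (simp add: add.commute)
  have i3: "(i+1) mod m \<noteq> (i+m-1) mod m"
  proof
    assume "(i+1) mod m = (i+m-1) mod m"
    then have "((i+m-1) mod m + 1) mod m = ((i+1) mod m + 1) mod m" by simp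
    then have "i = (i + 2) mod m" using mod_prev[OF im] by (simp add: mod_Suc_eq)
    moreover have "(i + 2) mod m \<noteq> i" using idx_ne[OF im, of 2] m3 by simp
    ultimately show False by simp
  qed
  have ab: "a \<noteq> b" using ne[OF _ pm i3] m3 unfolding a_def b_def by simp
  have ax: "a \<noteq> x" using ne[OF _ im i1] m3 unfolding a_def x_def by simp
  have bx: "b \<noteq> x" using ne[OF pm im i2] unfolding b_def x_def by simp
  have "(i+1) mod m < m" using m3 by simp
  then have aV: "a \<in> V" "b \<in> V" using sV pm nth_mem[of _ cs] unfolding a_def b_def m_def by auto
  have path: "\<And>k. k \<le> m - 2 \<Longrightarrow> (del_vert_E E x)\<^sup>*\<^sup>* a (cs ! ((i + 1 + k) mod m))"
  proof -
    fix k show "k \<le> m - 2 \<Longrightarrow> (del_vert_E E x)\<^sup>*\<^sup>* a (cs ! ((i + 1 + k) mod m))"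
    proof (induction k)
      case 0 then show ?case unfolding a_def by simp
    next
      case (Suc k)
      let ?j = "(i + 1 + k) mod m"
      have jm: "?j < m" using m3 by simp
      have e: "E (cs ! ?j) (cs ! ((?j + 1) mod m))" using ed[OF jm] .
      have eq: "(?j + 1) mod m = (i + 1 + Suc k) mod m" by (simp add: mod_Suc_eq)
      have n1: "?j \<noteq> i" using idx_ne[OF im, of "1 + k"] Suc.prems by (simp add: add.assoc)
      have n2: "(i + 1 + Suc k) mod m \<noteq> i" using idx_ne[OF im, of "1 + Suc k"] Suc.prems by (simp add: add.assoc)
      have "cs ! ?j \<noteq> x" using ne[OF jm im n1] unfolding x_def .
      moreover have "cs ! ((i + 1 + Suc k) mod m) \<noteq> x" using ne[OF _ im n2] m3 unfolding x_def by simp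
      ultimately have "del_vert_E E x (cs ! ?j) (cs ! ((i + 1 + Suc k) mod m))"
        using e eq by (simp add: del_vert_E_def)
      moreover have "(del_vert_E E x)\<^sup>*\<^sup>* a (cs ! ?j)" using Suc by simp
      ultimately show ?case by (meson rtranclp.rtrancl_into_rtrancl)
    qed
  qed
  have pp: "(del_vert_E E x)\<^sup>*\<^sup>* a (cs ! ((i + 1 + (m - 2)) mod m))" by (rule path) simp
  have eqq: "i + 1 + (m - 2) = i + m - 1" using m3 by linarith
  have "(del_vert_E E x)\<^sup>*\<^sup>* a b" using pp unfolding eqq b_def .
  moreover have "nb cs x = {a, b}"
  proof
    show "nb cs x \<subseteq> {a, b}"
    proof
      fix y assume "y \<in> nb cs x"
      then obtain j where j: "j < m" "{x, y} = {cs ! j, cs ! ((j + 1) mod m)}"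
        unfolding nb_def cycle_edges_def m_def by blast
      have jm1: "(j + 1) mod m < m" using m3 by simp
      from j(2) have "(x = cs ! j \<and> y = cs ! ((j + 1) mod m)) \<or> (x = cs ! ((j + 1) mod m) \<and> y = cs ! j)"
        by (simp add: doubleton_eq_iff)
      then show "y \<in> {a, b}"
      proof
        assume h: "x = cs ! j \<and> y = cs ! ((j + 1) mod m)"
        then have "j = i" using ne[OF j(1) im] unfolding x_def by metis
        then show ?thesis using h unfolding a_def by simp
      next
        assume h: "x = cs ! ((j + 1) mod m) \<and> y = cs ! j"
        then have "(j + 1) mod m = i" using ne[OF jm1 im] unfolding x_def by metis
        then have "j = (i + m - 1) mod m" using mod_prev_inv[OF j(1)] by blast
        then show ?thesis using h unfolding b_def by simp
      qed
    qed
    show "{a, b} \<subseteq> nb cs x"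
    proof -
      have "{x, a} \<in> cycle_edges cs" unfolding cycle_edges_def x_def a_def m_def using im m_def by blast
      moreover have "{cs ! ((i + m - 1) mod m), cs ! (((i + m - 1) mod m + 1) mod m)} \<in> cycle_edges cs"
        unfolding cycle_edges_def using pm m_def by blast
      then have "{x, b} \<in> cycle_edges cs" using mod_prev[OF im] unfolding x_def b_def by (simp add: insert_commute)
      ultimately show ?thesis unfolding nb_def by blast
    qed
  qed
  ultimately show ?thesis using Exa Exb ab ax bx aV by blast
qed


lemma cyc_set_sub:
  assumes c1: "is_cycle V E C1" and c2: "is_cycle V E C2" and u1: "u \<in> set C1" and u2: "u \<in> set C2"
    and H: "\<forall>x\<in>set C1 \<inter> set C2. nb C1 x = nb C2 x"
  shows "set C2 \<subseteq> set C1"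
proof -
  define m where "m = length C2"
  have m0: "m > 0" using u2 m_def by (cases C2) auto
  have l1: "length C1 > 0" using u1 by (cases C1) auto
  obtain j where j: "j < m" "C2 ! j = u" using u2 unfolding m_def by (auto simp: in_set_conv_nth)
  have claim: "\<And>k. C2 ! ((j + k) mod m) \<in> set C1"
  proof -
    fix k show "C2 ! ((j + k) mod m) \<in> set C1"
    proof (induction k)
      case 0 then show ?case using j u1 by simp
    next
      case (Suc k)
      let ?p = "(j + k) mod m"
      have pm: "?p < m" using m0 by simp
      have y2: "C2 ! ?p \<in> set C2" using pm m_def by simp
      have "{C2 ! ?p, C2 ! ((?p + 1) mod m)} \<in> cycle_edges C2" unfolding cycle_edges_def m_def
        using pm m_def by blast
      moreover have "(?p + 1) mod m = (j + Suc k) mod m" by (simp add: mod_Suc_eq)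
      ultimately have "C2 ! ((j + Suc k) mod m) \<in> nb C2 (C2 ! ?p)" unfolding nb_def by simp
      then have "C2 ! ((j + Suc k) mod m) \<in> nb C1 (C2 ! ?p)" using H Suc.IH y2 by auto
      then have "{C2 ! ?p, C2 ! ((j + Suc k) mod m)} \<in> cycle_edges C1" unfolding nb_def by simp
      then show ?case using cycle_edges_sub[OF _ l1] by blast
    qed
  qed
  show ?thesis
  proof
    fix t assume "t \<in> set C2"
    then obtain i where i: "i < m" "C2 ! i = t" unfolding m_def by (auto simp: in_set_conv_nth)
    have "(j + (i + m - j)) mod m = i" using i j by simp
    then show "t \<in> set C1" using claim[of "i + m - j"] i by simp
  qed
qed

lemma cyc_edges_sub:
  assumes c1: "is_cycle V E C1" and c2: "is_cycle V E C2" and u1: "u \<in> set C1" and u2: "u \<in> set C2"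
    and H: "\<forall>x\<in>set C1 \<inter> set C2. nb C1 x = nb C2 x"
  shows "cycle_edges C2 \<subseteq> cycle_edges C1"
proof
  fix e assume "e \<in> cycle_edges C2"
  then obtain k where k: "k < length C2" "e = {C2 ! k, C2 ! ((k + 1) mod length C2)}"
    unfolding cycle_edges_def by blast
  have y: "C2 ! k \<in> set C2" using k by simp
  then have y1: "C2 ! k \<in> set C1" using cyc_set_sub[OF assms] by blast
  have "C2 ! ((k + 1) mod length C2) \<in> nb C2 (C2 ! k)" unfolding nb_def using k unfolding cycle_edges_def by blast
  then have "C2 ! ((k + 1) mod length C2) \<in> nb C1 (C2 ! k)" using H y y1 by auto
  then show "e \<in> cycle_edges C1" using k unfolding nb_def by simp
qed

lemma two_cycles:
  assumes c1: "is_cycle V E C1" and c2: "is_cycle V E C2" and u1: "u \<in> set C1" and u2: "u \<in> set C2"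
    and ne: "cycle_edges C1 \<noteq> cycle_edges C2"
  shows "\<exists>x\<in>set C1 \<inter> set C2. nb C1 x \<noteq> nb C2 x"
proof (rule ccontr)
  assume "\<not> ?thesis"
  then have H: "\<forall>x\<in>set C1 \<inter> set C2. nb C1 x = nb C2 x" by blast
  then have H': "\<forall>x\<in>set C2 \<inter> set C1. nb C2 x = nb C1 x" by auto
  have "cycle_edges C2 \<subseteq> cycle_edges C1" using cyc_edges_sub[OF c1 c2 u1 u2 H] .
  moreover have "cycle_edges C1 \<subseteq> cycle_edges C2" using cyc_edges_sub[OF c2 c1 u2 u1 H'] .
  ultimately show False using ne by blast
qed

lemma img_drop1:
  assumes "finite N" "a \<in> N" "b \<in> N" "a \<noteq> b" "f a = f b"
  shows "card (f ` N) + 1 \<le> card N"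
proof -
  have "f ` N \<subseteq> f ` (N - {b})"
  proof
    fix z assume "z \<in> f ` N"
    then obtain y where y: "y \<in> N" "z = f y" by blast
    show "z \<in> f ` (N - {b})"
    proof (cases "y = b")
      case True then show ?thesis using y assms by (metis DiffI image_eqI singletonD)
    next
      case False then show ?thesis using y by blast
    qed
  qed
  then have "f ` N = f ` (N - {b})" by blast
  then have "card (f ` N) \<le> card (N - {b})" by (metis card_image_le finite_Diff assms(1))
  moreover have "card (N - {b}) + 1 = card N" using assms
    by (metis Suc_eq_plus1 card_Suc_Diff1)
  ultimately show ?thesis by linarith
qed

lemma img_drop2:
  assumes "finite N" "a \<in> N" "b \<in> N" "a' \<in> N" "b' \<in> N" "a \<noteq> b" "a' \<noteq> b'" "b' \<noteq> a" "b' \<noteq> b"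
    "f a = f b" "f a' = f b'"
  shows "card (f ` N) + 2 \<le> card N"
proof -
  have "f ` N \<subseteq> f ` (N - {b, b'})"
  proof
    fix z assume "z \<in> f ` N"
    then obtain y where y: "y \<in> N" "z = f y" by blast
    show "z \<in> f ` (N - {b, b'})"
    proof (cases "y = b")
      case True
      then have "z = f a" using y assms by simp
      then show ?thesis using assms by blast
    next
      case False
      show ?thesis
      proof (cases "y = b'")
        case True
        then have zz: "z = f a'" using y assms by simp
        show ?thesis
        proof (cases "a' = b")
          case True
          then have "z = f a" using zz assms by simp
          then show ?thesis using assms by blast
        next
          case False
          then show ?thesis using zz assms by blast
        qed
      next
        case False
        then show ?thesis using y \<open>y \<noteq> b\<close> by blast
      qed
    qed
  qed
  then have "card (f ` N) \<le> card (f ` (N - {b, b'}))" by (rule card_mono[rotated]) (use assms in simp)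
  also have "\<dots> \<le> card (N - {b, b'})" by (rule card_image_le) (use assms in simp)
  also have "card (N - {b, b'}) = card N - 2" using assms by (simp add: card_Diff_subset)
  finally have "card (f ` N) \<le> card N - 2" .
  moreover have "card N \<ge> 2" using assms
    by (metis card_2_iff card_mono empty_subsetI finite_Diff insert_subset)
  ultimately show ?thesis by linarith
qed

lemma finN: "simple_graph V E \<Longrightarrow> finite {y. E x y}"
  using sg_fin sg_V by (metis (mono_tags, lifting) finite_subset mem_Collect_eq subsetI)

lemma cyc_drop0:
  assumes sg: "simple_graph V E" and xV: "x \<in> V"
  shows "cyclomatic (del_vert_V V x) (del_vert_E E x) \<le> cyclomatic V E"
proof -
  let ?f = "\<lambda>y. reach (del_vert_V V x) (del_vert_E E x) `` {y}"
  have "card (?f ` {y. E x y}) \<le> degree E x" unfolding degree_def using card_image_le[OF finN[OF sg]] .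
  then show ?thesis using cyc_del[OF sg xV] by linarith
qed

lemma cyc_drop1:
  assumes sg: "simple_graph V E" and cyc: "is_cycle V E cs" and xs: "x \<in> set cs"
  shows "cyclomatic (del_vert_V V x) (del_vert_E E x) \<le> cyclomatic V E - 1"
proof -
  let ?f = "\<lambda>y. reach (del_vert_V V x) (del_vert_E E x) `` {y}"
  have xV: "x \<in> V" using cyc xs unfolding is_cycle_def by auto
  obtain i where i: "i < length cs" "x = cs ! i" using xs by (auto simp: in_set_conv_nth)
  obtain a b where ab: "E x a" "E x b" "a \<noteq> b" "a \<noteq> x" "b \<noteq> x" "a \<in> V" "b \<in> V"
    "(del_vert_E E x)\<^sup>*\<^sup>* a b"
    using cyc_nbrs[OF sg cyc i(1)] i(2) by blast
  have sym: "\<And>p q. del_vert_E E x p q \<Longrightarrow> del_vert_E E x q p" using del_sym sg_sym[OF sg] by metis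
  have "?f a = ?f b"
    by (rule class_eq[of "del_vert_E E x", OF sym ab(8)]) (use ab in \<open>auto simp: del_vert_V_def\<close>)
  then have "card (?f ` {y. E x y}) + 1 \<le> degree E x" unfolding degree_def
    using img_drop1[OF finN[OF sg, of x], of a b ?f] ab by auto
  then show ?thesis using cyc_del[OF sg xV] by linarith
qed

lemma cyc_drop2:
  assumes sg: "simple_graph V E" and c1: "is_cycle V E C1" and c2: "is_cycle V E C2"
    and x1: "x \<in> set C1" and x2: "x \<in> set C2" and ne: "nb C1 x \<noteq> nb C2 x"
  shows "cyclomatic (del_vert_V V x) (del_vert_E E x) \<le> cyclomatic V E - 2"
proof -
  let ?f = "\<lambda>y. reach (del_vert_V V x) (del_vert_E E x) `` {y}"
  have xV: "x \<in> V" using c1 x1 unfolding is_cycle_def by auto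
  have sym: "\<And>p q. del_vert_E E x p q \<Longrightarrow> del_vert_E E x q p" using del_sym sg_sym[OF sg] by metis
  obtain i where i: "i < length C1" "x = C1 ! i" using x1 by (auto simp: in_set_conv_nth)
  obtain a b where ab: "E x a" "E x b" "a \<noteq> b" "a \<noteq> x" "b \<noteq> x" "a \<in> V" "b \<in> V"
    "(del_vert_E E x)\<^sup>*\<^sup>* a b" "nb C1 x = {a, b}"
    using cyc_nbrs[OF sg c1 i(1)] i(2) by blast
  obtain i' where i': "i' < length C2" "x = C2 ! i'" using x2 by (auto simp: in_set_conv_nth)
  obtain a' b' where ab': "E x a'" "E x b'" "a' \<noteq> b'" "a' \<noteq> x" "b' \<noteq> x" "a' \<in> V" "b' \<in> V"
    "(del_vert_E E x)\<^sup>*\<^sup>* a' b'" "nb C2 x = {a', b'}"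
    using cyc_nbrs[OF sg c2 i'(1)] i'(2) by blast
  have fab: "?f a = ?f b"
    by (rule class_eq[of "del_vert_E E x", OF sym ab(8)]) (use ab in \<open>auto simp: del_vert_V_def\<close>)
  have fab': "?f a' = ?f b'"
    by (rule class_eq[of "del_vert_E E x", OF sym ab'(8)]) (use ab' in \<open>auto simp: del_vert_V_def\<close>)
  have "\<not> (a' \<in> {a, b} \<and> b' \<in> {a, b})"
  proof
    assume "a' \<in> {a, b} \<and> b' \<in> {a, b}"
    then have "{a', b'} = {a, b}" using ab'(3) by auto
    then show False using ne ab(9) ab'(9) by simp
  qed
  then consider "a' \<notin> {a, b}" | "b' \<notin> {a, b}" by blast
  then have "card (?f ` {y. E x y}) + 2 \<le> degree E x" unfolding degree_def
  proof cases
    case 1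
    then show "card (?f ` {y. E x y}) + 2 \<le> card {y. E x y}"
      using img_drop2[OF finN[OF sg, of x], of a b b' a' ?f] ab ab' fab fab' by auto
  next
    case 2
    then show "card (?f ` {y. E x y}) + 2 \<le> card {y. E x y}"
      using img_drop2[OF finN[OF sg, of x], of a b a' b' ?f] ab ab' fab fab' by auto
  qed
  then show ?thesis using cyc_del[OF sg xV] by linarith
qed


definition gpath :: "'a set \<Rightarrow> ('a \<Rightarrow> 'a \<Rightarrow> bool) \<Rightarrow> 'a list \<Rightarrow> bool" where
  "gpath V E xs \<longleftrightarrow> xs \<noteq> [] \<and> distinct xs \<and> set xs \<subseteq> V \<and> (\<forall>i. Suc i < length xs \<longrightarrow> E (xs ! i) (xs ! Suc i))"

lemma pendant_exists:
  assumes sg: "simple_graph V E" and Eab: "E a b" and nc: "\<forall>x\<in>V. \<not> on_cycle V E x"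
  shows "\<exists>v w. E v w \<and> (\<forall>y. E v y \<longrightarrow> y = w)"
proof -
  have finV: "finite V" using sg_fin[OF sg] .
  let ?L = "{length xs | xs. gpath V E xs}"
  have Lb: "?L \<subseteq> {..card V}"
  proof
    fix n assume "n \<in> ?L"
    then obtain xs where "gpath V E xs" "n = length xs" by blast
    then have "card (set xs) = n" "set xs \<subseteq> V" unfolding gpath_def using distinct_card by auto
    then have "n \<le> card V" using card_mono[OF finV, of "set xs"] by simp
    then show "n \<in> {..card V}" by simp
  qed
  have finL: "finite ?L" using Lb finite_subset by blast
  have p0: "gpath V E [a, b]" using Eab sg_V[OF sg Eab] sg_irr[OF sg Eab] unfolding gpath_def
    by (auto simp: less_Suc_eq)
  then have "length [a, b] \<in> ?L" by blast
  then have "?L \<noteq> {}" by blast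
  then have "Max ?L \<in> ?L" using Max_in[OF finL] by blast
  then obtain xs where xs: "gpath V E xs" "length xs = Max ?L" by auto
  have maxi: "\<And>ys. gpath V E ys \<Longrightarrow> length ys \<le> length xs"
  proof -
    fix ys assume "gpath V E ys"
    then have "length ys \<in> ?L" by blast
    then show "length ys \<le> length xs" unfolding xs(2) by (rule Max_ge[OF finL])
  qed
  have l2: "length xs \<ge> 2" using maxi[OF p0] by simp
  have xsd: "distinct xs" "set xs \<subseteq> V" "\<And>i. Suc i < length xs \<Longrightarrow> E (xs ! i) (xs ! Suc i)"
    using xs(1) unfolding gpath_def by auto
  define p where "p = xs ! 0"
  define q where "q = xs ! 1"
  have Epq: "E p q" using xsd(3)[of 0] l2 unfolding p_def q_def by simp
  have "\<forall>y. E p y \<longrightarrow> y = q"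
  proof (intro allI impI, rule ccontr)
    fix y assume Epy: "E p y" and yq: "y \<noteq> q"
    show False
    proof (cases "y \<in> set xs")
      case False
      have "gpath V E (y # xs)"
        unfolding gpath_def
      proof (intro conjI allI impI)
        show "y # xs \<noteq> []" by simp
        show "distinct (y # xs)" using False xsd by simp
        show "set (y # xs) \<subseteq> V" using xsd sg_V[OF sg Epy] by simp
        fix i assume i: "Suc i < length (y # xs)"
        show "E ((y # xs) ! i) ((y # xs) ! Suc i)"
        proof (cases i)
          case 0 then show ?thesis using sg_sym[OF sg Epy] unfolding p_def by simp
        next
          case (Suc k) then show ?thesis using xsd(3)[of k] i by simp
        qed
      qed
      from maxi[OF this] show False by simp
    next
      case True
      then obtain j where j: "j < length xs" "xs ! j = y" by (auto simp: in_set_conv_nth)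
      have j0: "j \<noteq> 0" using j sg_irr[OF sg Epy] unfolding p_def by (cases j) auto
      have j1: "j \<noteq> 1" using j yq unfolding q_def by auto
      define cs where "cs = take (Suc j) xs"
      have lcs: "length cs = Suc j" using j unfolding cs_def by simp
      have csn: "\<And>k. k \<le> j \<Longrightarrow> cs ! k = xs ! k" unfolding cs_def by simp
      have "is_cycle V E cs"
        unfolding is_cycle_def
      proof (intro conjI allI impI)
        show "3 \<le> length cs" using lcs j0 j1 by simp
        show "distinct cs" using xsd unfolding cs_def by simp
        show "set cs \<subseteq> V" using xsd(2) set_take_subset[of "Suc j" xs] unfolding cs_def by blast
        fix i assume i: "i < length cs"
        show "E (cs ! i) (cs ! ((i + 1) mod length cs))"
        proof (cases "i < j")
          case True
          then have "(i + 1) mod length cs = Suc i" using lcs by simp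
          then show ?thesis using csn[of i] csn[of "Suc i"] True xsd(3)[of i] j by simp
        next
          case False
          then have "i = j" using i lcs by simp
          then have "(i + 1) mod length cs = 0" using lcs by simp
          then show ?thesis using csn[of 0] csn[of j] \<open>i = j\<close> j sg_sym[OF sg Epy] unfolding p_def by simp
        qed
      qed
      moreover have "p \<in> set cs" using csn[of 0] lcs unfolding p_def by (metis nth_mem zero_le zero_less_Suc)
      moreover have "p \<in> V" using sg_V[OF sg Epq] by simp
      ultimately show False using nc unfolding on_cycle_def by blast
    qed
  qed
  then show ?thesis using Epq by blast
qed

lemma indep_fin:
  assumes "finite V"
  shows "finite {card S | S. independent V E S}" "{card S | S. independent V E S} \<noteq> {}"
proof -
  have "{card S | S. independent V E S} \<subseteq> {..card V}"
    using card_mono[OF assms] by (auto simp: independent_def)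
  then show "finite {card S | S. independent V E S}" using finite_subset by blast
  have "independent V E {}" by (simp add: independent_def)
  then show "{card S | S. independent V E S} \<noteq> {}" by blast
qed

lemma alpha_ge: "finite V \<Longrightarrow> independent V E S \<Longrightarrow> card S \<le> independence_number V E"
proof -
  assume f: "finite V" and i: "independent V E S"
  have "card S \<in> {card S | S. independent V E S}" using i by blast
  then show ?thesis unfolding independence_number_def by (rule Max_ge[OF indep_fin(1)[OF f]])
qed

lemma alpha_ex: "finite V \<Longrightarrow> \<exists>S. independent V E S \<and> card S = independence_number V E"
proof -
  assume f: "finite V"
  have "Max {card S | S. independent V E S} \<in> {card S | S. independent V E S}"
    by (rule Max_in[OF indep_fin(1)[OF f] indep_fin(2)[OF f]])
  then show ?thesis unfolding independence_number_def by auto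
qed

lemma alpha_del_le:
  assumes "finite V"
  shows "independence_number (del_vert_V V x) (del_vert_E E x) \<le> independence_number V E"
proof -
  obtain S where S: "independent (del_vert_V V x) (del_vert_E E x) S"
    "card S = independence_number (del_vert_V V x) (del_vert_E E x)"
    using alpha_ex[of "del_vert_V V x" "del_vert_E E x"] assms unfolding del_vert_V_def by blast
  have "independent V E S" using S(1) unfolding independent_def del_vert_V_def del_vert_E_def by blast
  then show ?thesis using alpha_ge[OF assms] S(2) by metis
qed

lemma alpha_iso:
  assumes sg: "simple_graph V E" and xV: "x \<in> V" and iso: "\<And>y. \<not> E x y"
  shows "independence_number (del_vert_V V x) (del_vert_E E x) + 1 \<le> independence_number V E"
proof -
  have finV: "finite V" using sg_fin[OF sg] .
  obtain S where S: "independent (del_vert_V V x) (del_vert_E E x) S"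
    "card S = independence_number (del_vert_V V x) (del_vert_E E x)"
    using alpha_ex[of "del_vert_V V x" "del_vert_E E x"] finV unfolding del_vert_V_def by blast
  have SV: "S \<subseteq> V - {x}" using S(1) unfolding independent_def del_vert_V_def by blast
  have "independent V E (insert x S)"
    unfolding independent_def
  proof (intro conjI ballI)
    show "insert x S \<subseteq> V" using SV xV by blast
    fix p q assume p: "p \<in> insert x S" and q: "q \<in> insert x S"
    show "\<not> E p q"
    proof
      assume Epq: "E p q"
      have "E q p" using sg_sym[OF sg Epq] .
      then have "p \<noteq> x" "q \<noteq> x" using iso Epq by metis+
      then have "p \<in> S" "q \<in> S" using p q by auto
      then have "\<not> del_vert_E E x p q" using S(1) unfolding independent_def by blast
      then show False using Epq \<open>p \<noteq> x\<close> \<open>q \<noteq> x\<close> by (simp add: del_vert_E_def)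
    qed
  qed
  moreover have "card (insert x S) = card S + 1"
  proof -
    have "finite S" using SV finV finite_subset by blast
    moreover have "x \<notin> S" using SV by blast
    ultimately show ?thesis by simp
  qed
  ultimately show ?thesis using alpha_ge[OF finV] S(2) by metis
qed

lemma alpha_edge:
  assumes sg: "simple_graph V E" and Evw: "E v w"
  shows "independence_number V E \<le> independence_number (del_vert_V (del_vert_V V w) v) (del_vert_E (del_vert_E E w) v) + 1"
proof -
  have finV: "finite V" using sg_fin[OF sg] .
  obtain S where S: "independent V E S" "card S = independence_number V E" using alpha_ex finV by blast
  have SV: "S \<subseteq> V" using S(1) unfolding independent_def by blast
  have fin': "finite (del_vert_V (del_vert_V V w) v)" using finV by (simp add: del_vert_V_def)
  have "independent (del_vert_V (del_vert_V V w) v) (del_vert_E (del_vert_E E w) v) (S - {v, w})"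
    using S(1) unfolding independent_def del_vert_V_def del_vert_E_def by blast
  then have c1: "card (S - {v, w}) \<le> independence_number (del_vert_V (del_vert_V V w) v) (del_vert_E (del_vert_E E w) v)"
    using alpha_ge[OF fin'] by blast
  have finS: "finite S" using SV finV finite_subset by blast
  have "\<not> (v \<in> S \<and> w \<in> S)" using S(1) Evw unfolding independent_def by blast
  then have "card S \<le> card (S - {v, w}) + 1"
  proof -
    assume h: "\<not> (v \<in> S \<and> w \<in> S)"
    have "S \<subseteq> insert v (S - {v, w}) \<or> S \<subseteq> insert w (S - {v, w})" using h by blast
    then show ?thesis
    proof
      assume "S \<subseteq> insert v (S - {v, w})"
      then have "card S \<le> card (insert v (S - {v, w}))" by (rule card_mono[rotated]) (use finS in simp)
      also have "\<dots> \<le> card (S - {v, w}) + 1" using finS by (simp add: card_insert_if)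
      finally show ?thesis .
    next
      assume "S \<subseteq> insert w (S - {v, w})"
      then have "card S \<le> card (insert w (S - {v, w}))" by (rule card_mono[rotated]) (use finS in simp)
      also have "\<dots> \<le> card (S - {v, w}) + 1" using finS by (simp add: card_insert_if)
      finally show ?thesis .
    qed
  qed
  then show ?thesis using c1 S(2) by linarith
qed

lemma alpha_pend:
  assumes sg: "simple_graph V E" and vV: "v \<in> V" and vu: "v \<noteq> u" and only: "\<And>y. E v y \<Longrightarrow> y = u"
  shows "independence_number (del_vert_V (del_vert_V V u) v) (del_vert_E (del_vert_E E u) v) + 1 \<le> independence_number V E"
proof -
  have finV: "finite V" using sg_fin[OF sg] .
  have fin': "finite (del_vert_V (del_vert_V V u) v)" using finV by (simp add: del_vert_V_def)
  obtain S where S: "independent (del_vert_V (del_vert_V V u) v) (del_vert_E (del_vert_E E u) v) S"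
    "card S = independence_number (del_vert_V (del_vert_V V u) v) (del_vert_E (del_vert_E E u) v)"
    using alpha_ex[OF fin'] by blast
  have SV: "S \<subseteq> V - {u, v}" using S(1) unfolding independent_def del_vert_V_def by blast
  have "independent V E (insert v S)"
    unfolding independent_def
  proof (intro conjI ballI)
    show "insert v S \<subseteq> V" using SV vV by blast
    fix p q assume p: "p \<in> insert v S" and q: "q \<in> insert v S"
    show "\<not> E p q"
    proof
      assume Epq: "E p q"
      have nv: "\<And>z. z \<in> insert v S \<Longrightarrow> \<not> E v z"
      proof
        fix z assume "z \<in> insert v S" "E v z"
        then have "z = u" using only by blast
        then show False using \<open>z \<in> insert v S\<close> SV vu by blast
      qed
      have "p \<noteq> v" using nv[OF q] Epq by blast
      moreover have "q \<noteq> v" using nv[OF p] sg_sym[OF sg Epq] by blast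
      ultimately have "p \<in> S" "q \<in> S" using p q by auto
      then have "\<not> del_vert_E (del_vert_E E u) v p q" using S(1) unfolding independent_def by blast
      then show False using Epq \<open>p \<in> S\<close> \<open>q \<in> S\<close> SV by (auto simp: del_vert_E_def)
    qed
  qed
  moreover have "card (insert v S) = card S + 1"
  proof -
    have "finite S" using SV finV finite_subset by blast
    moreover have "v \<notin> S" using SV by blast
    ultimately show ?thesis by simp
  qed
  ultimately show ?thesis using alpha_ge[OF finV] S(2) by metis
qed



lemma card_del: "finite V \<Longrightarrow> x \<in> V \<Longrightarrow> int (card (del_vert_V V x)) = int (card V) - 1"
proof -
  assume f: "finite V" and x: "x \<in> V"
  then have "card V > 0" using card_gt_0_iff by blast
  then show ?thesis using f x unfolding del_vert_V_def by (simp add: of_nat_diff)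
qed

lemma alpha_le_card: "finite V \<Longrightarrow> independence_number V E \<le> card V"
proof -
  assume f: "finite V"
  obtain S where "independent V E S" "card S = independence_number V E" using alpha_ex[OF f] by blast
  then show ?thesis using card_mono[OF f] unfolding independent_def by metis
qed

lemma LB_empty:
  assumes sg: "simple_graph V E" and e: "V = {}"
  shows "cyclomatic V E = 0" "independence_number V E = 0"
proof -
  have "edge_set E = {}" using sg e unfolding edge_set_def simple_graph_def by auto
  moreover have "V // reach V E = {}" using e by simp
  ultimately show "cyclomatic V E = 0" unfolding cyclomatic_def nc_reach using e by simp
  show "independence_number V E = 0" using alpha_le_card[of V E] e by simp
qed

theorem LB:
  fixes V :: "'a::linorder set"
  assumes "unit_gain_graph V E phi"
  shows "2 * int (card V) - 2 * cyclomatic V E - 2 * int (independence_number V E) \<le> int (gain_rank V E phi)"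
  using assms
proof (induction "card V" arbitrary: V E rule: less_induct)
  case less
  have ugg: "unit_gain_graph V E phi" by fact
  have sg: "simple_graph V E" using ugg unfolding unit_gain_graph_def by blast
  have finV: "finite V" using sg_fin[OF sg] .
  have IH: "\<And>V' E'. card V' < card V \<Longrightarrow> unit_gain_graph V' E' phi \<Longrightarrow>
     2 * int (card V') - 2 * cyclomatic V' E' - 2 * int (independence_number V' E') \<le> int (gain_rank V' E' phi)"
    using less.hyps by blast
  show ?case
  proof (cases "V = {}")
    case True
    then show ?thesis using LB_empty[OF sg True] by simp
  next
    case nonempty: False
    show ?thesis
    proof (cases "\<exists>x\<in>V. \<forall>y. \<not> E x y")
      case True
      then obtain x where x: "x \<in> V" "\<And>y. \<not> E x y" by blast
      let ?V = "del_vert_V V x" and ?E = "del_vert_E E x"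
      have c: "card ?V < card V" using x finV unfolding del_vert_V_def by (meson card_Diff1_less)
      have ih: "2 * int (card ?V) - 2 * cyclomatic ?V ?E - 2 * int (independence_number ?V ?E) \<le> int (gain_rank ?V ?E phi)"
        using IH[OF c ugg_del[OF ugg]] .
      have r: "gain_rank ?V ?E phi \<le> gain_rank V E phi" using rank_del_le[OF finV] .
      have cy: "cyclomatic ?V ?E \<le> cyclomatic V E" using cyc_drop0[OF sg x(1)] .
      have al: "independence_number ?V ?E + 1 \<le> independence_number V E" using alpha_iso[OF sg x(1)] x(2) by blast
      have cv: "int (card ?V) = int (card V) - 1" using card_del[OF finV x(1)] .
      show ?thesis using ih r cy al cv by linarith
    next
      case noiso: False
      show ?thesis
      proof (cases "\<exists>x\<in>V. on_cycle V E x")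
        case True
        then obtain x cs where x: "x \<in> V" "is_cycle V E cs" "x \<in> set cs" unfolding on_cycle_def by blast
        let ?V = "del_vert_V V x" and ?E = "del_vert_E E x"
        have c: "card ?V < card V" using x finV unfolding del_vert_V_def by (meson card_Diff1_less)
        have ih: "2 * int (card ?V) - 2 * cyclomatic ?V ?E - 2 * int (independence_number ?V ?E) \<le> int (gain_rank ?V ?E phi)"
          using IH[OF c ugg_del[OF ugg]] .
        have r: "gain_rank ?V ?E phi \<le> gain_rank V E phi" using rank_del_le[OF finV] .
        have cy: "cyclomatic ?V ?E \<le> cyclomatic V E - 1" using cyc_drop1[OF sg x(2,3)] .
        have al: "independence_number ?V ?E \<le> independence_number V E" using alpha_del_le[OF finV] .
        have cv: "int (card ?V) = int (card V) - 1" using card_del[OF finV x(1)] .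
        show ?thesis using ih r cy al cv by linarith
      next
        case False
        obtain x0 where "x0 \<in> V" using nonempty by blast
        then obtain y0 where "E x0 y0" using noiso by blast
        then obtain v w where vw: "E v w" "\<And>y. E v y \<Longrightarrow> y = w"
          using pendant_exists[OF sg _ ] False by blast
        have vV: "v \<in> V" and wV: "w \<in> V" using sg_V[OF sg vw(1)] by auto
        have vnw: "v \<noteq> w" using sg_irr[OF sg vw(1)] .
        have Ewv: "E w v" using sg_sym[OF sg vw(1)] .
        have sym: "\<And>x. E x v \<Longrightarrow> E v x" using sg_sym[OF sg] by blast
        have p1: "phi v w \<noteq> 0" and p2: "phi w v \<noteq> 0"
          using ugg vw(1) Ewv unfolding unit_gain_graph_def by (metis norm_zero zero_neq_one)+
        let ?V1 = "del_vert_V V w" and ?E1 = "del_vert_E E w"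
        let ?V = "del_vert_V ?V1 v" and ?E = "del_vert_E ?E1 v"
        have sg1: "simple_graph ?V1 ?E1" using sg_del[OF sg] .
        have v1: "v \<in> ?V1" using vV vnw by (simp add: del_vert_V_def)
        have cv1: "int (card ?V1) = int (card V) - 1" using card_del[OF finV wV] .
        have cv: "int (card ?V) = int (card ?V1) - 1" using card_del[OF sg_fin[OF sg1] v1] .
        have c: "card ?V < card V" using cv cv1 by linarith
        have ih: "2 * int (card ?V) - 2 * cyclomatic ?V ?E - 2 * int (independence_number ?V ?E) \<le> int (gain_rank ?V ?E phi)"
          using IH[OF c ugg_del[OF ugg_del[OF ugg]]] .
        have r: "gain_rank ?V ?E phi + 2 \<le> gain_rank V E phi"
          using rank_pendant[OF finV vV wV vnw vw(1) vw(2) sym p1 p2 Ewv] .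
        have cy1: "cyclomatic ?V1 ?E1 \<le> cyclomatic V E" using cyc_drop0[OF sg wV] .
        have cy: "cyclomatic ?V ?E \<le> cyclomatic ?V1 ?E1" using cyc_drop0[OF sg1 v1] .
        have al: "independence_number ?V ?E + 1 \<le> independence_number V E" using alpha_pend[OF sg vV vnw vw(2)] .
        have r': "int (gain_rank ?V ?E phi) + 2 \<le> int (gain_rank V E phi)" using r by linarith
        have al': "int (independence_number ?V ?E) + 1 \<le> int (independence_number V E)" using al by linarith
        show ?thesis using ih r' cy cy1 al' cv cv1 by linarith
      qed
    qed
  qed
qed


theorem lemma4p4:
  fixes V :: "'a::linorder set" and E :: "'a \<Rightarrow> 'a \<Rightarrow> bool"
    and phi :: "'a \<Rightarrow> 'a \<Rightarrow> complex" and u :: 'a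
  assumes "unit_gain_graph V E phi"
    and "int (gain_rank V E phi) =
           2 * int (card V) - 2 * cyclomatic V E - 2 * int (independence_number V E)"
    and "on_cycle V E u"
  shows "gain_rank V E phi = gain_rank (del_vert_V V u) (del_vert_E E u) phi
    \<and> int (gain_rank (del_vert_V V u) (del_vert_E E u) phi) =
           2 * (int (card V) - 1) - 2 * cyclomatic (del_vert_V V u) (del_vert_E E u)
             - 2 * int (independence_number (del_vert_V V u) (del_vert_E E u))
    \<and> cyclomatic V E = cyclomatic (del_vert_V V u) (del_vert_E E u) + 1
    \<and> independence_number V E = independence_number (del_vert_V V u) (del_vert_E E u)
    \<and> card (cycles_through V E u) = 1 \<and> \<not> quasi_pendant E u"
proof -
  have ugg: "unit_gain_graph V E phi" and eq: "int (gain_rank V E phi) =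
           2 * int (card V) - 2 * cyclomatic V E - 2 * int (independence_number V E)"
    using assms by auto
  have sg: "simple_graph V E" using ugg unfolding unit_gain_graph_def by blast
  have finV: "finite V" using sg_fin[OF sg] .
  obtain cs0 where cs0: "is_cycle V E cs0" "u \<in> set cs0" using assms(3) unfolding on_cycle_def by blast
  have uV: "u \<in> V" using cs0 unfolding is_cycle_def by auto
  let ?V = "del_vert_V V u" and ?E = "del_vert_E E u"
  have lb: "2 * int (card ?V) - 2 * cyclomatic ?V ?E - 2 * int (independence_number ?V ?E) \<le> int (gain_rank ?V ?E phi)"
    using LB[OF ugg_del[OF ugg]] .
  have r: "gain_rank ?V ?E phi \<le> gain_rank V E phi" using rank_del_le[OF finV] .
  have cy: "cyclomatic ?V ?E \<le> cyclomatic V E - 1" using cyc_drop1[OF sg cs0] .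
  have al: "independence_number ?V ?E \<le> independence_number V E" using alpha_del_le[OF finV] .
  have cv: "int (card ?V) = int (card V) - 1" using card_del[OF finV uV] .
  have r1: "gain_rank V E phi = gain_rank ?V ?E phi" using lb r cy al cv eq by linarith
  have ri: "int (gain_rank ?V ?E phi) \<le> int (gain_rank V E phi)" using r by simp
  have ali: "int (independence_number ?V ?E) \<le> int (independence_number V E)" using al by simp
  have "int (gain_rank ?V ?E phi) = 2 * int (card ?V) - 2 * cyclomatic ?V ?E - 2 * int (independence_number ?V ?E)"
    using lb ri cy ali eq cv by linarith
  then have r2: "int (gain_rank ?V ?E phi) = 2 * (int (card V) - 1) - 2 * cyclomatic ?V ?E - 2 * int (independence_number ?V ?E)"
    using cv by simp
  have r3: "cyclomatic V E = cyclomatic ?V ?E + 1" using lb r cy al cv eq by linarith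
  have r4: "independence_number V E = independence_number ?V ?E" using lb r cy al cv eq by linarith
  have one: "\<And>cs. is_cycle V E cs \<Longrightarrow> u \<in> set cs \<Longrightarrow> cycle_edges cs = cycle_edges cs0"
  proof (rule ccontr)
    fix cs assume c: "is_cycle V E cs" "u \<in> set cs" "cycle_edges cs \<noteq> cycle_edges cs0"
    obtain x where x: "x \<in> set cs \<inter> set cs0" "nb cs x \<noteq> nb cs0 x"
      using two_cycles[OF c(1) cs0(1) c(2) cs0(2) c(3)] by blast
    have xV: "x \<in> V" using x c unfolding is_cycle_def by auto
    let ?Vx = "del_vert_V V x" and ?Ex = "del_vert_E E x"
    have lbx: "2 * int (card ?Vx) - 2 * cyclomatic ?Vx ?Ex - 2 * int (independence_number ?Vx ?Ex) \<le> int (gain_rank ?Vx ?Ex phi)"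
      using LB[OF ugg_del[OF ugg]] .
    have rx: "gain_rank ?Vx ?Ex phi \<le> gain_rank V E phi" using rank_del_le[OF finV] .
    have cyx: "cyclomatic ?Vx ?Ex \<le> cyclomatic V E - 2" using cyc_drop2[OF sg c(1) cs0(1) _ _ x(2)] x(1) by blast
    have alx: "independence_number ?Vx ?Ex \<le> independence_number V E" using alpha_del_le[OF finV] .
    have cvx: "int (card ?Vx) = int (card V) - 1" using card_del[OF finV xV] .
    show False using lbx rx cyx alx cvx eq by linarith
  qed
  have ce_sub: "\<And>cs. is_cycle V E cs \<Longrightarrow> cycle_edges cs \<subseteq> Pow V"
  proof
    fix cs e assume c: "is_cycle V E cs" and e: "e \<in> cycle_edges cs"
    have "length cs > 0" using c unfolding is_cycle_def by auto
    then have "e \<subseteq> set cs" using cycle_edges_sub[OF e] by blast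
    then show "e \<in> Pow V" using c unfolding is_cycle_def by auto
  qed
  have "cycles_through V E u = {cycle_edges cs0}"
  proof
    show "cycles_through V E u \<subseteq> {cycle_edges cs0}" unfolding cycles_through_def using one by blast
    show "{cycle_edges cs0} \<subseteq> cycles_through V E u" unfolding cycles_through_def using cs0 by blast
  qed
  then have r5: "card (cycles_through V E u) = 1" by simp
  have r6: "\<not> quasi_pendant E u"
  proof
    assume "quasi_pendant E u"
    then obtain y where y: "E u y" "pendant E y" unfolding quasi_pendant_def by blast
    have Eyu: "E y u" using sg_sym[OF sg y(1)] .
    have "card {z. E y z} = 1" using y(2) unfolding pendant_def degree_def .
    then obtain z0 where z0: "{z. E y z} = {z0}" using card_1_singletonE by blast
    have only: "\<And>z. E y z \<Longrightarrow> z = u"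
    proof -
      fix z assume "E y z"
      then have "z \<in> {z. E y z}" "u \<in> {z. E y z}" using Eyu by auto
      then have "z \<in> {z0}" "u \<in> {z0}" unfolding z0 by auto
      then show "z = u" by simp
    qed
    have yV: "y \<in> V" using sg_V[OF sg y(1)] by simp
    have yu: "y \<noteq> u" using sg_irr[OF sg y(1)] by simp
    have sym: "\<And>x. E x y \<Longrightarrow> E y x" using sg_sym[OF sg] by blast
    have p1: "phi y u \<noteq> 0" and p2: "phi u y \<noteq> 0"
      using ugg y(1) Eyu unfolding unit_gain_graph_def by (metis norm_zero zero_neq_one)+
    let ?V2 = "del_vert_V ?V y" and ?E2 = "del_vert_E ?E y"
    have sg1: "simple_graph ?V ?E" using sg_del[OF sg] .
    have y1: "y \<in> ?V" using yV yu by (simp add: del_vert_V_def)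
    have rr: "gain_rank ?V2 ?E2 phi + 2 \<le> gain_rank V E phi"
      using rank_pendant[OF finV yV uV yu Eyu only sym p1 p2 y(1)] .
    have rr': "int (gain_rank ?V2 ?E2 phi) + 2 \<le> int (gain_rank V E phi)" using rr by linarith
    have lb2: "2 * int (card ?V2) - 2 * cyclomatic ?V2 ?E2 - 2 * int (independence_number ?V2 ?E2) \<le> int (gain_rank ?V2 ?E2 phi)"
      using LB[OF ugg_del[OF ugg_del[OF ugg]]] .
    have cy2: "cyclomatic ?V2 ?E2 \<le> cyclomatic ?V ?E" using cyc_drop0[OF sg1 y1] .
    have al2: "independence_number ?V2 ?E2 + 1 \<le> independence_number V E" using alpha_pend[OF sg yV yu only] .
    have al2': "int (independence_number ?V2 ?E2) + 1 \<le> int (independence_number V E)" using al2 by linarith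
    have cv2: "int (card ?V2) = int (card ?V) - 1" using card_del[OF sg_fin[OF sg1] y1] .
    show False using rr' lb2 cy2 cy al2' cv2 cv eq by linarith
  qed
  show ?thesis using r1 r2 r3 r4 r5 r6 by blast
qed

end
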